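(* Let $\mathcal{G}$ be an undirected weighted graph (nonzero real weights, possibly negative) with $c$ connected components, let $\mathcal{F}$ be a spanning forest with cycle subgraph $\mathcal{C}$, and suppose $L(\mathcal{G})$ has $n_+$ positive, $n_-$ negative and $n_0$ zero eigenvalues (counted with multiplicity). Then the essential edge Laplacian $L_{ess}(\mathcal{F})=L_e(\mathcal{F})R_{(\mathcal{F},\mathcal{C})}WR_{(\mathcal{F},\mathcal{C})}^T$ has only real eigenvalues, of which $n_+$ are positive, $n_-$ are negative and $n_0-c$ are zero (counted with multiplicity).
   Context: A weighted graph $\mathcal{G}=(\mathcal{V},\mathcal{E},\mathcal{W})$ has weight function $\mathcal{W}:\mathcal{E}\to\mathbb{R}\setminus\{0\}$; $W$ is the diagonal matrix of edge weights. With an arbitrary orientation of edges, the incidence matrix $E\in\mathbb{R}^{|\mathcal{V}|\times|\mathcal{E}|}$ has in the column of edge $(i,j)$ entry $+1$ in row $i$, $-1$ in row $j$, $0$ elsewhere; $L(\mathcal{G})=EWE^T$. A spanning forest $\mathcal{F}$ is an acyclic subgraph with $|\mathcal{V}|-c$ edges containing a spanning tree of each component; the cycle subgraph $\mathcal{C}$ consists of the remaining edges. Edges are ordered so $E=[E_{\mathcal{F}}\ E_{\mathcal{C}}]$ and $W$ correspondingly. $L_e(\mathcal{F})=E_{\mathcal{F}}^TE_{\mathcal{F}}$ (invertible), and $R_{(\mathcal{F},\mathcal{C})}=[\,I\ \ L_e(\mathcal{F})^{-1}E_{\mathcal{F}}^TE_{\mathcal{C}}\,]$. *)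

theory Defs
  imports Complex_Main "Jordan_Normal_Form.Jordan_Normal_Form" "Jordan_Normal_Form.Gauss_Jordan_Elimination"
begin

text \<open>A graph on vertex set {0..<nv} is given by a list of edges (i,j); the pair order is the
  arbitrary orientation. Edge k has weight w k.\<close>

definition valid_graph :: "nat \<Rightarrow> (nat \<times> nat) list \<Rightarrow> bool" where
  "valid_graph nv es \<longleftrightarrow>
     (\<forall>(i,j)\<in>set es. i < nv \<and> j < nv \<and> i \<noteq> j) \<and>
     (\<forall>k<length es. \<forall>l<length es. k \<noteq> l \<longrightarrow>
         {fst (es!k), snd (es!k)} \<noteq> {fst (es!l), snd (es!l)})"

definition adj :: "(nat \<times> nat) list \<Rightarrow> nat \<Rightarrow> nat \<Rightarrow> bool" where
  "adj es a b \<longleftrightarrow> (\<exists>(x,y)\<in>set es. (a = x \<and> b = y) \<or> (a = y \<and> b = x))"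

definition connected_in :: "(nat \<times> nat) list \<Rightarrow> nat \<Rightarrow> nat \<Rightarrow> bool" where
  "connected_in es = (adj es)\<^sup>*\<^sup>*"

definition num_components :: "nat \<Rightarrow> (nat \<times> nat) list \<Rightarrow> nat" where
  "num_components nv es = card ((\<lambda>v. {u \<in> {0..<nv}. connected_in es u v}) ` {0..<nv})"

definition acyclic_edges :: "(nat \<times> nat) list \<Rightarrow> bool" where
  "acyclic_edges fs \<longleftrightarrow> (\<forall>i<length fs.
      \<not> connected_in (take i fs @ drop (Suc i) fs) (fst (fs!i)) (snd (fs!i)))"

definition spanning_forest_prefix :: "nat \<Rightarrow> (nat \<times> nat) list \<Rightarrow> nat \<Rightarrow> bool" where
  "spanning_forest_prefix nv es k \<longleftrightarrow>
     k \<le> length es \<and> k = nv - num_components nv es \<and>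
     acyclic_edges (take k es) \<and>
     (\<forall>u<nv. \<forall>v<nv. connected_in (take k es) u v \<longleftrightarrow> connected_in es u v)"

definition incidence :: "nat \<Rightarrow> (nat \<times> nat) list \<Rightarrow> real mat" where
  "incidence nv es = mat nv (length es)
     (\<lambda>(v,k). if v = fst (es!k) then 1 else if v = snd (es!k) then -1 else 0)"

definition weight_mat :: "nat \<Rightarrow> (nat \<Rightarrow> real) \<Rightarrow> real mat" where
  "weight_mat m w = mat m m (\<lambda>(i,j). if i = j then w i else 0)"

definition laplacian :: "nat \<Rightarrow> (nat \<times> nat) list \<Rightarrow> (nat \<Rightarrow> real) \<Rightarrow> real mat" where
  "laplacian nv es w = incidence nv es * weight_mat (length es) w * transpose_mat (incidence nv es)"

definition edge_laplacian :: "nat \<Rightarrow> (nat \<times> nat) list \<Rightarrow> real mat" where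
  "edge_laplacian nv fs = transpose_mat (incidence nv fs) * incidence nv fs"

text \<open>R = [ I  L_e(F)^{-1} E_F^T E_C ], where F = first k edges, C = remaining edges.\<close>
definition R_mat :: "nat \<Rightarrow> (nat \<times> nat) list \<Rightarrow> nat \<Rightarrow> real mat" where
  "R_mat nv es k =
     (let X = the (mat_inverse (edge_laplacian nv (take k es))) *
              transpose_mat (incidence nv (take k es)) * incidence nv (drop k es)
      in mat k (length es) (\<lambda>(i,j). if j < k then (if i = j then 1 else 0) else X $$ (i, j - k)))"

definition essential_edge_laplacian :: "nat \<Rightarrow> (nat \<times> nat) list \<Rightarrow> (nat \<Rightarrow> real) \<Rightarrow> nat \<Rightarrow> real mat" where
  "essential_edge_laplacian nv es w k =
     edge_laplacian nv (take k es) * R_mat nv es k * weight_mat (length es) w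
       * transpose_mat (R_mat nv es k)"

definition cpoly :: "real mat \<Rightarrow> complex poly" where
  "cpoly A = char_poly (map_mat complex_of_real A)"

definition only_real_eigenvalues :: "real mat \<Rightarrow> bool" where
  "only_real_eigenvalues A \<longleftrightarrow> (\<forall>z. poly (cpoly A) z = 0 \<longrightarrow> Im z = 0)"

definition n_pos :: "real mat \<Rightarrow> nat" where
  "n_pos A = (\<Sum>z\<in>{z. poly (cpoly A) z = 0 \<and> Im z = 0 \<and> Re z > 0}. order z (cpoly A))"

definition n_neg :: "real mat \<Rightarrow> nat" where
  "n_neg A = (\<Sum>z\<in>{z. poly (cpoly A) z = 0 \<and> Im z = 0 \<and> Re z < 0}. order z (cpoly A))"

definition n_zero :: "real mat \<Rightarrow> nat" where
  "n_zero A = (if poly (cpoly A) 0 = 0 then order 0 (cpoly A) else 0)"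

end

theory Submission
  imports Defs
begin


lemma det_sylvester:
  fixes A :: "'a :: field mat"
  assumes A: "A \<in> carrier_mat n k" and B: "B \<in> carrier_mat k n"
  shows "x ^ k * det (x \<cdot>\<^sub>m 1\<^sub>m n - A * B) = x ^ n * det (x \<cdot>\<^sub>m 1\<^sub>m k - B * A)"
proof -
  define T where "T = four_block_mat (x \<cdot>\<^sub>m 1\<^sub>m n) A B (1\<^sub>m k)"
  define U1 where "U1 = four_block_mat (1\<^sub>m n) (0\<^sub>m n k) (- B) (x \<cdot>\<^sub>m 1\<^sub>m k)"
  define U2 where "U2 = four_block_mat (1\<^sub>m n) (0\<^sub>m n k) (- B) (1\<^sub>m k)"
  have T: "T \<in> carrier_mat (n+k) (n+k)" unfolding T_def using A B by auto
  have U1: "U1 \<in> carrier_mat (n+k) (n+k)" unfolding U1_def using A B by auto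
  have U2: "U2 \<in> carrier_mat (n+k) (n+k)" unfolding U2_def using A B by auto
  have dU1: "det U1 = x ^ k" unfolding U1_def
    by (subst det_four_block_mat_upper_right_zero[of _ n _ k], insert B, auto)
  have dU2: "det U2 = 1" unfolding U2_def
    by (subst det_four_block_mat_upper_right_zero[of _ n _ k], insert B, auto)
  have e1: "U1 * T = four_block_mat (x \<cdot>\<^sub>m 1\<^sub>m n) A (0\<^sub>m k n) (x \<cdot>\<^sub>m 1\<^sub>m k - B * A)"
    unfolding U1_def T_def
    apply (subst mult_four_block_mat[of _ n n _ k _ k, OF _ _ _ _ _ A B])
    using A B by auto
  have "det (U1 * T) = x ^ n * det (x \<cdot>\<^sub>m 1\<^sub>m k - B * A)"
    unfolding e1 by (subst det_four_block_mat_lower_left_zero[of _ n _ k], insert A B, auto)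
  moreover have "det (U1 * T) = x ^ k * det T" using det_mult[OF U1 T] dU1 by simp
  moreover have e2: "T * U2 = four_block_mat (x \<cdot>\<^sub>m 1\<^sub>m n - A * B) A (0\<^sub>m k n) (1\<^sub>m k)"
    unfolding U2_def T_def
    apply (subst mult_four_block_mat[of _ n n _ k _ k, OF _ A B])
    using A B by auto
  have "det (T * U2) = det (x \<cdot>\<^sub>m 1\<^sub>m n - A * B)"
    unfolding e2 by (subst det_four_block_mat_lower_left_zero[of _ n _ k], insert A B, auto)
  moreover have "det (T * U2) = det T" using det_mult[OF T U2] dU2 by simp
  ultimately show ?thesis by simp
qed


lemma neg_char_matrix:
  fixes M :: "'a :: field mat"
  assumes M: "M \<in> carrier_mat n n"
  shows "- char_matrix M x = x \<cdot>\<^sub>m 1\<^sub>m n - M"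
  using M unfolding char_matrix_def by (intro eq_matI, auto)

lemma char_poly_sylvester:
  fixes A :: "complex mat"
  assumes A: "A \<in> carrier_mat n k" and B: "B \<in> carrier_mat k n"
  and syl: "\<And>x. x ^ k * det (x \<cdot>\<^sub>m 1\<^sub>m n - A * B) = x ^ n * det (x \<cdot>\<^sub>m 1\<^sub>m k - B * A)"
  shows "[:0,1:] ^ k * char_poly (A * B) = [:0,1:] ^ n * char_poly (B * A)"
proof -
  have AB: "A * B \<in> carrier_mat n n" and BA: "B * A \<in> carrier_mat k k" using A B by auto
  show ?thesis
  proof (rule poly_eq_poly_eq_iff[THEN iffD1], rule ext)
    fix x
    show "poly ([:0,1:] ^ k * char_poly (A * B)) x = poly ([:0,1:] ^ n * char_poly (B * A)) x"
      unfolding poly_mult poly_power char_poly_matrix[OF AB] char_poly_matrix[OF BA]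
        neg_char_matrix[OF AB] neg_char_matrix[OF BA]
      using syl[of x] by simp
  qed
qed

lemma sym_real_eig:
  fixes A :: "real mat"
  assumes A: "A \<in> carrier_mat n n" and S: "\<And>i j. i < n \<Longrightarrow> j < n \<Longrightarrow> A $$ (i,j) = A $$ (j,i)"
  and z: "poly (char_poly (map_mat complex_of_real A)) z = 0"
  shows "Im z = 0"
proof -
  let ?C = "map_mat complex_of_real A"
  have C: "?C \<in> carrier_mat n n" using A by auto
  from z eigenvalue_root_char_poly[OF C] obtain v where ev: "eigenvector ?C v z"
    unfolding eigenvalue_def by auto
  hence v: "v \<in> carrier_vec n" "v \<noteq> 0\<^sub>v n" and Cv: "?C *\<^sub>v v = z \<cdot>\<^sub>v v"
    unfolding eigenvector_def using C by auto
  define s where "s = (\<Sum>i<n. \<Sum>j<n. cnj (v $ i) * complex_of_real (A $$ (i,j)) * v $ j)"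
  define N where "N = (\<Sum>i<n. cnj (v $ i) * v $ i)"
  have "s = (\<Sum>i<n. cnj (v $ i) * (?C *\<^sub>v v) $ i)"
    unfolding s_def using A v
    by (auto simp: scalar_prod_def sum_distrib_left mult.assoc intro!: sum.cong sum.reindex_bij_witness[of _ id id])
  also have "\<dots> = z * N" unfolding Cv N_def using v
    by (auto simp: sum_distrib_left intro!: sum.cong)
  finally have sz: "s = z * N" .
  have "cnj s = (\<Sum>i<n. \<Sum>j<n. v $ i * complex_of_real (A $$ (i,j)) * cnj (v $ j))"
    unfolding s_def by (simp add: cnj_sum)
  also have "\<dots> = (\<Sum>j<n. \<Sum>i<n. v $ i * complex_of_real (A $$ (i,j)) * cnj (v $ j))"
    by (rule sum.swap)
  also have "\<dots> = s" unfolding s_def using S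
    by (intro sum.cong refl, auto simp: ac_simps)
  finally have "Im (cnj s) = Im s" by simp
  hence "Im s = 0" by simp
  define r where "r = (\<Sum>i<n. (cmod (v $ i))^2)"
  have Nr: "N = complex_of_real r" unfolding N_def r_def
    unfolding of_real_sum
  proof (intro sum.cong refl)
    fix i
    have "complex_of_real ((cmod (v $ i))\<^sup>2) = v $ i * cnj (v $ i)" by (rule complex_norm_square)
    thus "cnj (v $ i) * v $ i = complex_of_real ((cmod (v $ i))\<^sup>2)" by (simp add: mult.commute)
  qed
  from v obtain i where i: "i < n" "v $ i \<noteq> 0"
    by (metis carrier_vecD eq_vecI index_zero_vec(1) index_zero_vec(2))
  have "r > 0" unfolding r_def
    by (rule sum_pos2[of _ i], insert i, auto)
  have "Im (z * N) = Im z * r" unfolding Nr by simp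
  with sz \<open>Im s = 0\<close> \<open>r > 0\<close> show ?thesis by simp
qed


definition okg :: "nat \<Rightarrow> (nat \<times> nat) list \<Rightarrow> bool" where
  "okg nv fs \<longleftrightarrow> (\<forall>(i,j)\<in>set fs. i < nv \<and> j < nv \<and> i \<noteq> j)"

lemma incidence_carrier[simp]: "incidence nv fs \<in> carrier_mat nv (length fs)"
  unfolding incidence_def by auto

lemma incidence_dims[simp]: "dim_row (incidence nv fs) = nv" "dim_col (incidence nv fs) = length fs"
  unfolding incidence_def by auto

lemma incidence_index: "v < nv \<Longrightarrow> i < length fs \<Longrightarrow> incidence nv fs $$ (v,i) =
  (if v = fst (fs!i) then 1 else if v = snd (fs!i) then -1 else 0)"
  unfolding incidence_def by auto

lemma incidence_index2: assumes "okg nv fs" "v < nv" "i < length fs"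
  shows "incidence nv fs $$ (v,i) = (if v = fst (fs!i) then 1 else 0) - (if v = snd (fs!i) then 1 else 0)"
proof -
  have "fs ! i \<in> set fs" using assms by auto
  hence "fst (fs!i) \<noteq> snd (fs!i)" using assms(1) unfolding okg_def by (cases "fs!i", auto)
  thus ?thesis using incidence_index[OF assms(2,3)] by auto
qed

lemma mem_remove_nth: assumes "i < length fs" "i \<noteq> j"
  shows "fs ! i \<in> set (take j fs @ drop (Suc j) fs)"
proof (cases "i < j")
  case True
  hence "take j fs ! i = fs ! i" by simp
  moreover have "i < length (take j fs)" using True assms by simp
  ultimately show ?thesis by (metis UnI1 nth_mem set_append)
next
  case False
  hence ij: "i > j" using assms by simp
  hence "drop (Suc j) fs ! (i - Suc j) = fs ! i" using assms by simp
  moreover have "i - Suc j < length (drop (Suc j) fs)" using ij assms by simp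
  ultimately show ?thesis by (metis UnI2 nth_mem set_append)
qed

lemma adj_mem: "(p,q) \<in> set fs \<Longrightarrow> adj fs p q \<and> adj fs q p"
  unfolding adj_def by auto

lemma incidence_inj:
  assumes ok: "okg nv fs" and ac: "acyclic_edges fs"
  and y: "y \<in> carrier_vec (length fs)" and Ey: "incidence nv fs *\<^sub>v y = 0\<^sub>v nv"
  shows "y = 0\<^sub>v (length fs)"
proof (rule eq_vecI)
  show "dim_vec y = dim_vec (0\<^sub>v (length fs))" using y by simp
  fix j assume "j < dim_vec (0\<^sub>v (length fs))"
  hence j: "j < length fs" by simp
  let ?E = "incidence nv fs"
  define F' where "F' = take j fs @ drop (Suc j) fs"
  define a where "a = fst (fs!j)"
  define b where "b = snd (fs!j)"
  define S where "S = {v. v < nv \<and> connected_in F' a v}"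
  have finS: "finite S" unfolding S_def by auto
  have "fs ! j \<in> set fs" using j by simp
  hence anv: "a < nv" using ok unfolding okg_def a_def by (cases "fs!j", auto)
  have aS: "a \<in> S" unfolding S_def connected_in_def using anv by auto
  have bS: "b \<notin> S" using ac j unfolding S_def acyclic_edges_def a_def b_def F'_def by auto
  define d where "d i = (if fst (fs!i) \<in> S then 1 else 0) - (if snd (fs!i) \<in> S then 1 else (0::real))" for i
  have d: "d i = (if i = j then 1 else 0)" if i: "i < length fs" for i
  proof (cases "i = j")
    case True thus ?thesis using aS bS unfolding d_def a_def b_def by simp
  next
    case False
    obtain p q where pq: "fs ! i = (p,q)" by force
    have "(p,q) \<in> set F'" using mem_remove_nth[OF i False] pq unfolding F'_def by simp
    from adj_mem[OF this] have "p \<in> S \<longleftrightarrow> q \<in> S" 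
      using ok i pq nth_mem[OF i] unfolding S_def connected_in_def okg_def
      by (auto intro: rtranclp.rtrancl_into_rtrancl)
    thus ?thesis using False pq unfolding d_def by auto
  qed
  have sumE: "(\<Sum>v\<in>S. ?E $$ (v,i)) = d i" if i: "i < length fs" for i
  proof -
    have "(\<Sum>v\<in>S. ?E $$ (v,i)) = (\<Sum>v\<in>S. (if v = fst (fs!i) then 1 else 0) - (if v = snd (fs!i) then 1 else 0))"
      by (rule sum.cong[OF refl], rule incidence_index2[OF ok _ i], auto simp: S_def)
    also have "\<dots> = d i" unfolding d_def sum_subtractf using finS
      by (simp add: sum.delta')
    finally show ?thesis .
  qed
  have "0 = (\<Sum>v\<in>S. (?E *\<^sub>v y) $ v)" unfolding Ey S_def by simp
  also have "\<dots> = (\<Sum>v\<in>S. \<Sum>i<length fs. ?E $$ (v,i) * y $ i)"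
    using y by (intro sum.cong refl, auto simp: S_def scalar_prod_def lessThan_atLeast0)
  also have "\<dots> = (\<Sum>i<length fs. (\<Sum>v\<in>S. ?E $$ (v,i)) * y $ i)"
    by (subst sum.swap, simp add: sum_distrib_right)
  also have "\<dots> = (\<Sum>i<length fs. (if i = j then y $ i else 0))"
    by (intro sum.cong refl, auto simp: sumE d)
  also have "\<dots> = y $ j" using j by simp
  finally show "y $ j = 0\<^sub>v (length fs) $ j" using j by simp
qed



lemma okg_take: "okg nv es \<Longrightarrow> okg nv (take k es)" unfolding okg_def by (auto dest: in_set_takeD)
lemma okg_drop: "okg nv es \<Longrightarrow> okg nv (drop k es)" unfolding okg_def by (auto dest: in_set_dropD)

lemma incidence_col: assumes ok: "okg nv fs" and i: "i < length fs"
  shows "incidence nv fs *\<^sub>v unit_vec (length fs) i = unit_vec nv (fst (fs!i)) - unit_vec nv (snd (fs!i))"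
proof -
  have "fs ! i \<in> set fs" using i by simp
  hence "fst (fs!i) < nv" "snd (fs!i) < nv" "fst (fs!i) \<noteq> snd (fs!i)" using ok unfolding okg_def
    by (cases "fs!i", auto)+
  thus ?thesis using i by (intro eq_vecI, auto simp: incidence_index)
qed

lemma colspace:
  assumes ok: "okg nv fs" and c: "connected_in fs a b" and a: "a < nv"
  shows "b < nv \<and> (\<exists>y \<in> carrier_vec (length fs). incidence nv fs *\<^sub>v y = unit_vec nv a - unit_vec nv b)"
  using c unfolding connected_in_def
proof (induction rule: rtranclp_induct)
  case base
  show ?case using a by (intro conjI bexI[of _ "0\<^sub>v (length fs)"], auto)
next
  case (step b c)
  then obtain y where bnv: "b < nv" and y: "y \<in> carrier_vec (length fs)"
    and Ey: "incidence nv fs *\<^sub>v y = unit_vec nv a - unit_vec nv b" by auto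
  from step(2) obtain p q where pq: "(p,q) \<in> set fs" and or: "(b = p \<and> c = q) \<or> (b = q \<and> c = p)"
    unfolding adj_def by auto
  from pq obtain i where i: "i < length fs" and fi: "fs ! i = (p,q)" by (auto simp: in_set_conv_nth)
  have pqnv: "p < nv" "q < nv" using ok pq unfolding okg_def by auto
  let ?u = "unit_vec (length fs) i"
  have Eu: "incidence nv fs *\<^sub>v ?u = unit_vec nv p - unit_vec nv q"
    using incidence_col[OF ok i] fi by simp
  show ?case
  proof (cases "b = p \<and> c = q")
    case True
    have "incidence nv fs *\<^sub>v (y + ?u) = incidence nv fs *\<^sub>v y + incidence nv fs *\<^sub>v ?u"
      using y by (intro mult_add_distrib_mat_vec[of _ nv "length fs"], auto)
    also have "\<dots> = unit_vec nv a - unit_vec nv c" unfolding Ey Eu using True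
      by (intro eq_vecI, auto)
    finally show ?thesis using True pqnv y by (intro conjI bexI[of _ "y + ?u"], auto)
  next
    case False
    hence F: "b = q" "c = p" using or by auto
    have "incidence nv fs *\<^sub>v (y - ?u) = incidence nv fs *\<^sub>v y - incidence nv fs *\<^sub>v ?u"
      using y by (intro mult_minus_distrib_mat_vec[of _ nv "length fs"], auto)
    also have "\<dots> = unit_vec nv a - unit_vec nv c" unfolding Ey Eu using F
      by (intro eq_vecI, auto)
    finally show ?thesis using F pqnv y by (intro conjI bexI[of _ "y - ?u"], auto)
  qed
qed

lemma gram_inj:
  fixes E :: "real mat"
  assumes E: "E \<in> carrier_mat n m"
  and inj: "\<And>y. y \<in> carrier_vec m \<Longrightarrow> E *\<^sub>v y = 0\<^sub>v n \<Longrightarrow> y = 0\<^sub>v m"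
  shows "det (transpose_mat E * E) \<noteq> 0"
proof
  have G: "transpose_mat E * E \<in> carrier_mat m m" using E by auto
  assume "det (transpose_mat E * E) = 0"
  from this[unfolded det_0_iff_vec_prod_zero[OF G]] obtain y where
    y: "y \<in> carrier_vec m" "y \<noteq> 0\<^sub>v m" and Gy: "(transpose_mat E * E) *\<^sub>v y = 0\<^sub>v m" by auto
  have "transpose_mat E *\<^sub>v (E *\<^sub>v y) = 0\<^sub>v m" using Gy E y by simp
  hence "(transpose_mat E *\<^sub>v (E *\<^sub>v y)) \<bullet> y = 0" using y by simp
  hence "(E *\<^sub>v y) \<bullet> (E *\<^sub>v y) = 0" using transpose_vec_mult_scalar[OF E y(1), of "E *\<^sub>v y"] E y by simp
  hence "(E *\<^sub>v y) \<bullet>c (E *\<^sub>v y) = 0" by simp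
  hence "E *\<^sub>v y = 0\<^sub>v n" using E y by (subst (asm) conjugate_square_eq_0_vec[of _ n], auto)
  with inj y show False by auto
qed



lemma cpoly_nz: "A \<in> carrier_mat n n \<Longrightarrow> cpoly A \<noteq> 0"
  unfolding cpoly_def using degree_monic_char_poly[of "map_mat complex_of_real A" n]
  by (metis coeff_0 map_carrier_mat zero_neq_one)

lemma n_zero_order: "cpoly A \<noteq> 0 \<Longrightarrow> n_zero A = order 0 (cpoly A)"
  unfolding n_zero_def using order_0I by auto

lemma counting:
  assumes eq: "cpoly L = [:0,1:]^c * cpoly Le" and nz: "cpoly Le \<noteq> 0"
  and re: "only_real_eigenvalues L"
  shows "only_real_eigenvalues Le \<and> n_pos Le = n_pos L \<and> n_neg Le = n_neg L
    \<and> n_zero L = c + n_zero Le"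
proof -
  have nzX: "[:0,1:]^c * cpoly Le \<noteq> (0 :: complex poly)" using nz by simp
  have ord: "order z (cpoly L) = (if z = 0 then c else 0) + order z (cpoly Le)" for z
  proof -
    have "order z (cpoly L) = order z ([:0,1:]^c) + order z (cpoly Le)"
      unfolding eq by (rule order_mult[OF nzX])
    moreover have "order z ([:0,1::complex:]^c) = (if z = 0 then c else 0)"
    proof (cases "z = 0")
      case True thus ?thesis using order_power_n_n[of 0 c] by simp
    next
      case False thus ?thesis by (simp, intro order_0I, simp)
    qed
    ultimately show ?thesis by simp
  qed
  have root: "z \<noteq> 0 \<Longrightarrow> poly (cpoly L) z = 0 \<longleftrightarrow> poly (cpoly Le) z = 0" for z
    unfolding eq by simp
  have r1: "only_real_eigenvalues Le" unfolding only_real_eigenvalues_def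
  proof (intro allI impI)
    fix z assume "poly (cpoly Le) z = 0"
    show "Im z = 0"
    proof (cases "z = 0")
      case False thus ?thesis using root[OF False] re \<open>poly (cpoly Le) z = 0\<close>
        unfolding only_real_eigenvalues_def by auto
    qed simp
  qed
  have pos: "n_pos Le = n_pos L" unfolding n_pos_def
  proof (rule sum.cong)
    show "{z. poly (cpoly Le) z = 0 \<and> Im z = 0 \<and> 0 < Re z} = {z. poly (cpoly L) z = 0 \<and> Im z = 0 \<and> 0 < Re z}"
      using root by (auto, (metis zero_complex.sel(1) order_less_irrefl)+)
    fix z assume "z \<in> {z. poly (cpoly L) z = 0 \<and> Im z = 0 \<and> 0 < Re z}"
    hence "z \<noteq> 0" by auto
    thus "order z (cpoly Le) = order z (cpoly L)" using ord[of z] by simp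
  qed
  have neg: "n_neg Le = n_neg L" unfolding n_neg_def
  proof (rule sum.cong)
    show "{z. poly (cpoly Le) z = 0 \<and> Im z = 0 \<and> Re z < 0} = {z. poly (cpoly L) z = 0 \<and> Im z = 0 \<and> Re z < 0}"
      using root by (auto, (metis zero_complex.sel(1) order_less_irrefl)+)
    fix z assume "z \<in> {z. poly (cpoly L) z = 0 \<and> Im z = 0 \<and> Re z < 0}"
    hence "z \<noteq> 0" by auto
    thus "order z (cpoly Le) = order z (cpoly L)" using ord[of z] by simp
  qed
  have "cpoly L \<noteq> 0" using nzX eq by simp
  hence "n_zero L = c + n_zero Le" using n_zero_order[OF nz] n_zero_order ord[of 0] by simp
  with r1 pos neg show ?thesis by simp
qed



theorem theorem1:
  fixes nv :: nat and es :: "(nat \<times> nat) list" and w :: "nat \<Rightarrow> real"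
    and c k np nm n0 :: nat
  assumes "valid_graph nv es"
    and "\<forall>i<length es. w i \<noteq> 0"
    and "c = num_components nv es"
    and "spanning_forest_prefix nv es k"
    and "n_pos (laplacian nv es w) = np"
    and "n_neg (laplacian nv es w) = nm"
    and "n_zero (laplacian nv es w) = n0"
  shows "only_real_eigenvalues (essential_edge_laplacian nv es w k)
    \<and> n_pos (essential_edge_laplacian nv es w k) = np
    \<and> n_neg (essential_edge_laplacian nv es w k) = nm
    \<and> int (n_zero (essential_edge_laplacian nv es w k)) = int n0 - int c"
proof -
  define m where "m = length es"
  have ok: "okg nv es" using assms(1) unfolding valid_graph_def okg_def by auto
  have km: "k \<le> m" and kc: "k = nv - c" and acy: "acyclic_edges (take k es)"
    and conn: "\<And>u v. u < nv \<Longrightarrow> v < nv \<Longrightarrow> connected_in (take k es) u v \<longleftrightarrow> connected_in es u v"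
    using assms(3,4) unfolding spanning_forest_prefix_def m_def by auto
  have cnv: "c \<le> nv" unfolding assms(3) num_components_def
    by (metis card_atLeastLessThan card_image_le diff_zero finite_atLeastLessThan)
  have nvkc: "nv = k + c" using kc cnv by simp
  define EF where "EF = incidence nv (take k es)"
  define EC where "EC = incidence nv (drop k es)"
  define E where "E = incidence nv es"
  define W where "W = weight_mat m w"
  define G where "G = edge_laplacian nv (take k es)"
  have EF: "EF \<in> carrier_mat nv k" unfolding EF_def using km m_def
    by (metis incidence_carrier length_take min.absorb2)
  have EC: "EC \<in> carrier_mat nv (m - k)" unfolding EC_def m_def by (metis incidence_carrier length_drop)
  have E: "E \<in> carrier_mat nv m" unfolding E_def m_def by simp
  have W: "W \<in> carrier_mat m m" unfolding W_def weight_mat_def by simp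
  have GEF: "G = transpose_mat EF * EF" unfolding G_def EF_def edge_laplacian_def ..
  have G: "G \<in> carrier_mat k k" using EF unfolding GEF by auto
  have okF: "okg nv (take k es)" by (rule okg_take[OF ok])
  have okC: "okg nv (drop k es)" by (rule okg_drop[OF ok])
  have detG: "det G \<noteq> 0" unfolding GEF
  proof (rule gram_inj[OF EF])
    fix y assume "y \<in> carrier_vec k" "EF *\<^sub>v y = 0\<^sub>v nv"
    thus "y = 0\<^sub>v k" using incidence_inj[OF okF acy, of y] EF unfolding EF_def
      by (metis carrier_matD(2) incidence_dims(2))
  qed
  obtain Gi where mi: "mat_inverse G = Some Gi"
  proof (cases "mat_inverse G")
    case None
    from mat_inverse(1)[OF G None, where b=undefined] det_non_zero_imp_unit[OF G detG, where b=undefined] show ?thesis by blast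
  qed auto
  from mat_inverse(2)[OF G mi] have GGi: "G * Gi = 1\<^sub>m k" and GiG: "Gi * G = 1\<^sub>m k"
    and Gi: "Gi \<in> carrier_mat k k" by auto
  define X where "X = Gi * transpose_mat EF * EC"
  have X: "X \<in> carrier_mat k (m - k)" unfolding X_def using Gi EF EC by auto
  have EFX: "EF * X = EC"
  proof (rule mat_col_eqI)
    fix j assume "j < dim_col EC"
    hence j: "j < m - k" using EC by auto
    define a where "a = fst (drop k es ! j)"
    define b where "b = snd (drop k es ! j)"
    have jd: "j < length (drop k es)" using j m_def by simp
    have mem: "(a, b) \<in> set es" unfolding a_def b_def using nth_mem[OF jd]
      by (auto dest: in_set_dropD)
    have anv: "a < nv" and bnv: "b < nv" using mem ok unfolding okg_def by auto
    have colEC: "col EC j = unit_vec nv a - unit_vec nv b"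
    proof -
      have ab: "a \<noteq> b" using mem ok unfolding okg_def by auto
      have d: "drop k es ! j = (a,b)" unfolding a_def b_def by simp
      show ?thesis unfolding EC_def using jd ab anv bnv
        by (intro eq_vecI, auto simp: incidence_index d unit_vec_def simp del: nth_drop)
    qed
    have "connected_in es a b" unfolding connected_in_def using adj_mem[OF mem] by auto
    hence "connected_in (take k es) a b" using conn anv bnv by auto
    from colspace[OF okF this anv] obtain y where y: "y \<in> carrier_vec k"
      and Ey: "EF *\<^sub>v y = unit_vec nv a - unit_vec nv b" unfolding EF_def
      using EF unfolding EF_def by (metis carrier_matD(2) incidence_dims(2))
    have "col (EF * X) j = EF *\<^sub>v col X j" using EF X j by (intro col_mult2[of _ nv k _ "m - k"], auto)
    also have "col X j = (Gi * transpose_mat EF) *\<^sub>v col EC j"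
      unfolding X_def using Gi EF EC j by (intro col_mult2[of _ k nv _ "m - k"], auto)
    also have "\<dots> = (Gi * transpose_mat EF) *\<^sub>v (EF *\<^sub>v y)" unfolding colEC Ey ..
    also have "\<dots> = (Gi * G) *\<^sub>v y"
    proof -
      have "(Gi * transpose_mat EF) *\<^sub>v (EF *\<^sub>v y) = Gi *\<^sub>v (transpose_mat EF *\<^sub>v (EF *\<^sub>v y))"
        using Gi EF y by (intro assoc_mult_mat_vec[of _ k k _ nv], auto)
      also have "transpose_mat EF *\<^sub>v (EF *\<^sub>v y) = (transpose_mat EF * EF) *\<^sub>v y"
        using EF y by (intro assoc_mult_mat_vec[symmetric, of _ k nv _ k], auto)
      also have "Gi *\<^sub>v ((transpose_mat EF * EF) *\<^sub>v y) = (Gi * (transpose_mat EF * EF)) *\<^sub>v y"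
        using Gi EF y by (intro assoc_mult_mat_vec[symmetric, of _ k k _ k], auto)
      finally show ?thesis unfolding GEF .
    qed
    also have "\<dots> = y" unfolding GiG using y by simp
    finally show "col (EF * X) j = col EC j" unfolding colEC Ey by simp
  qed (insert EF X EC, auto)
  define R where "R = R_mat nv es k"
  have Rdef: "R = mat k m (\<lambda>(i,j). if j < k then (if i = j then 1 else 0) else X $$ (i, j - k))"
    unfolding R_def R_mat_def Let_def mi X_def G_def[symmetric] EF_def EC_def m_def by (simp only: option.sel)
  have R: "R \<in> carrier_mat k m" unfolding Rdef by simp
  have ER: "E = EF * R"
  proof (rule eq_matI)
    fix v j assume "v < dim_row (EF * R)" "j < dim_col (EF * R)"
    hence v: "v < nv" and j: "j < m" using EF R by auto
    have "(EF * R) $$ (v,j) = row EF v \<bullet> col R j" using EF R v j by simp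
    also have "\<dots> = E $$ (v,j)"
    proof (cases "j < k")
      case True
      have "col R j = unit_vec k j" unfolding Rdef using True j by (intro eq_vecI, auto)
      hence "row EF v \<bullet> col R j = EF $$ (v, j)" using EF v True by simp
      thus ?thesis unfolding EF_def E_def using True v j km m_def by (simp add: incidence_index)
    next
      case False
      have "col R j = col X (j - k)" unfolding Rdef using False j X by (intro eq_vecI, auto)
      hence "row EF v \<bullet> col R j = (EF * X) $$ (v, j - k)" using EF X v j False by simp
      also have "\<dots> = EC $$ (v, j - k)" unfolding EFX ..
      finally show ?thesis unfolding EC_def E_def using False v j km m_def by (simp add: incidence_index)
    qed
    finally show "E $$ (v,j) = (EF * R) $$ (v,j)" ..
  qed (insert E EF R, auto)
  define M where "M = R * W * transpose_mat R"
  have M: "M \<in> carrier_mat k k" unfolding M_def using R W by auto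
  define A where "A = EF * M"
  define B where "B = transpose_mat EF"
  have A: "A \<in> carrier_mat nv k" unfolding A_def using EF M by auto
  have B: "B \<in> carrier_mat k nv" unfolding B_def using EF by auto
  define L where "L = laplacian nv es w"
  define Le where "Le = essential_edge_laplacian nv es w k"
  have L: "L = A * B"
  proof -
    have "L = EF * R * W * transpose_mat (EF * R)" unfolding L_def laplacian_def
      ER[symmetric] E_def W_def m_def ..
    also have "transpose_mat (EF * R) = transpose_mat R * transpose_mat EF"
      by (rule transpose_mult[OF EF R])
    also have "EF * R * W * (transpose_mat R * transpose_mat EF) = EF * (R * W * transpose_mat R) * transpose_mat EF"
    proof -
      have RT: "transpose_mat R \<in> carrier_mat m k" and EFT: "transpose_mat EF \<in> carrier_mat k nv" using R EF by auto
      have "EF * R * W = EF * (R * W)" by (rule assoc_mult_mat[OF EF R W])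
      moreover have "EF * (R * W) * (transpose_mat R * transpose_mat EF) = EF * (R * W * (transpose_mat R * transpose_mat EF))"
        by (rule assoc_mult_mat[of _ nv k _ m _ nv], insert EF R W RT EFT, auto)
      moreover have "R * W * (transpose_mat R * transpose_mat EF) = R * W * transpose_mat R * transpose_mat EF"
        by (rule assoc_mult_mat[symmetric, of _ k m _ k _ nv], insert EF R W RT EFT, auto)
      moreover have "EF * (R * W * transpose_mat R * transpose_mat EF) = EF * (R * W * transpose_mat R) * transpose_mat EF"
        by (rule assoc_mult_mat[symmetric, of _ nv k _ k _ nv], insert EF R W RT EFT, auto)
      ultimately show ?thesis by simp
    qed
    finally show ?thesis unfolding A_def B_def M_def .
  qed
  have Le: "Le = B * A"
  proof -
    have "Le = G * R * W * transpose_mat R" unfolding Le_def essential_edge_laplacian_def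
      G_def R_def W_def m_def ..
    also have "\<dots> = transpose_mat EF * (EF * (R * W * transpose_mat R))" unfolding GEF
    proof -
      have RT: "transpose_mat R \<in> carrier_mat m k" and EFT: "transpose_mat EF \<in> carrier_mat k nv" using R EF by auto
      have "transpose_mat EF * EF * R = transpose_mat EF * (EF * R)" by (rule assoc_mult_mat[OF EFT EF R])
      moreover have "transpose_mat EF * (EF * R) * W = transpose_mat EF * (EF * R * W)"
        by (rule assoc_mult_mat[of _ k nv _ m _ m], insert EF R W RT EFT, auto)
      moreover have "transpose_mat EF * (EF * R * W) * transpose_mat R = transpose_mat EF * (EF * R * W * transpose_mat R)"
        by (rule assoc_mult_mat[of _ k nv _ m _ k], insert EF R W RT EFT, auto)
      moreover have "EF * R * W = EF * (R * W)" by (rule assoc_mult_mat[OF EF R W])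
      moreover have "EF * (R * W) * transpose_mat R = EF * (R * W * transpose_mat R)"
        by (rule assoc_mult_mat[of _ nv k _ m _ k], insert EF R W RT EFT, auto)
      ultimately show "transpose_mat EF * EF * R * W * transpose_mat R = transpose_mat EF * (EF * (R * W * transpose_mat R))" by simp
    qed
    finally show ?thesis unfolding A_def B_def M_def .
  qed
  have Lc: "L \<in> carrier_mat nv nv" unfolding L using A B by auto
  have Lec: "Le \<in> carrier_mat k k" unfolding Le using A B by auto
  let ?Ac = "map_mat complex_of_real A" and ?Bc = "map_mat complex_of_real B"
  have Ac: "?Ac \<in> carrier_mat nv k" and Bc: "?Bc \<in> carrier_mat k nv" using A B by auto
  have "[:0,1:]^k * cpoly L = [:0,1:]^nv * cpoly Le"
    unfolding cpoly_def L Le of_real_hom.mat_hom_mult[OF A B] of_real_hom.mat_hom_mult[OF B A]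
    by (rule char_poly_sylvester[OF Ac Bc det_sylvester[OF Ac Bc]])
  hence "[:0,1:]^k * cpoly L = [:0,1:]^k * ([:0,1:]^c * cpoly Le)"
    unfolding nvkc power_add by (simp add: ac_simps)
  hence eq: "cpoly L = [:0,1:]^c * cpoly Le" by simp
  have sym: "L $$ (i,j) = L $$ (j,i)" if "i < nv" "j < nv" for i j
  proof -
    have "transpose_mat L = L" unfolding L_def laplacian_def E_def[symmetric] W_def[symmetric] m_def[symmetric]
    proof -
      have WT: "transpose_mat W = W" unfolding W_def weight_mat_def by (intro eq_matI, auto)
      have "transpose_mat (E * W * transpose_mat E) = transpose_mat (transpose_mat E) * transpose_mat (E * W)"
        by (rule transpose_mult[of _ nv m], insert E W, auto)
      also have "transpose_mat (E * W) = W * transpose_mat E" using transpose_mult[OF E W] WT by simp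
      finally show "transpose_mat (E * W * transpose_mat E) = E * W * transpose_mat E"
        using E W by (simp add: assoc_mult_mat[of _ nv m _ m _ nv])
    qed
    hence "transpose_mat L $$ (j,i) = L $$ (j,i)" by simp
    thus ?thesis using that Lc by simp
  qed
  have re: "only_real_eigenvalues L" unfolding only_real_eigenvalues_def cpoly_def
    using sym_real_eig[OF Lc sym] by blast
  from counting[OF eq cpoly_nz[OF Lec] re] show ?thesis
    unfolding Le_def L_def assms(5-7)[symmetric] by simp
qed

end
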